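(* For every $J\subseteq[n-1]$, $$\varphi(X^0_J)=2^{1+\#J}\sum_{F\in\mathring{\mathcal{F}}_n,\ F\subseteq J\cup(J+1)}\mathring{P}_F\quad\text{and}\quad\varphi(Y^0_J)=\sum_{F\in\mathring{\mathcal{F}}_n,\ F\subseteq J\triangle(J+1)}2^{1+\#F}\mathring{P}_F.$$
   Context: $B_n$: signed permutations $w=w_1\dots w_n$, values ordered $\cdots<-2<-1<1<2<\cdots$, $w_0=0$; $\mathrm{Des}(w)=\{i\in\{0,\dots,n-1\}:w_i>w_{i+1}\}$; $Y_J=\sum_{\mathrm{Des}(w)=J}w$, $X_J=\sum_{\mathrm{Des}(w)\subseteq J}w$. For $J\subseteq[n-1]$, $X^0_J=X_{\{0\}\cup J}$ and $Y^0_J=Y_{\{0\}\cup J}+Y_J$. $\varphi$: linear extension of $w\mapsto|w_1|\dots|w_n|$. For $u\in\mathfrak{S}_n$, $\mathring{\mathrm{Peak}}(u)=\{i\in\{2,\dots,n-1\}:u_{i-1}<u_i>u_{i+1}\}$; $\mathring{\mathcal{F}}_n$ is the set of subsets of $\{2,\dots,n-1\}$ with no two consecutive integers; $\mathring{P}_F=\sum_{\mathring{\mathrm{Peak}}(u)=F}u$. $J+1=\{j+1:j\in J\}$, $\triangle$ = symmetric difference. *)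

theory Defs
  imports Main
begin

text \<open>Signed permutations of [n] are integer lists w = w_1 ... w_n (w_i = w ! (i-1))
  such that |w_1|, ..., |w_n| is a permutation of 1..n.  The order
  ... < -2 < -1 < 1 < 2 < ... is the usual order on int, and w_0 = 0.
  Elements of the group algebras are represented by their coefficient
  functions (int-valued, finitely supported).\<close>

definition signed_perms :: "nat \<Rightarrow> int list set" where
  "signed_perms n = {w. length w = n \<and> distinct (map abs w) \<and> set (map abs w) = {1..int n}}"

definition perms :: "nat \<Rightarrow> nat list set" where
  "perms n = {u. length u = n \<and> distinct u \<and> set u = {1..n}}"

definition wval :: "int list \<Rightarrow> nat \<Rightarrow> int" where
  "wval w i = (if i = 0 then 0 else w ! (i - 1))"

definition Des :: "int list \<Rightarrow> nat set" where
  "Des w = {i. i < length w \<and> wval w i > wval w (i + 1)}"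

definition Ysum :: "nat \<Rightarrow> nat set \<Rightarrow> int list \<Rightarrow> int" where
  "Ysum n J = (\<lambda>w. if w \<in> signed_perms n \<and> Des w = J then 1 else 0)"

definition Xsum :: "nat \<Rightarrow> nat set \<Rightarrow> int list \<Rightarrow> int" where
  "Xsum n J = (\<lambda>w. if w \<in> signed_perms n \<and> Des w \<subseteq> J then 1 else 0)"

definition X0 :: "nat \<Rightarrow> nat set \<Rightarrow> int list \<Rightarrow> int" where
  "X0 n J = Xsum n (insert 0 J)"

definition Y0 :: "nat \<Rightarrow> nat set \<Rightarrow> int list \<Rightarrow> int" where
  "Y0 n J = (\<lambda>w. Ysum n (insert 0 J) w + Ysum n J w)"

text \<open>phi: linear extension of w \<mapsto> |w_1| ... |w_n| from the group algebra of B_n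
  to that of S_n (coefficient of u is the sum of coefficients of its preimages)\<close>
definition phi :: "nat \<Rightarrow> (int list \<Rightarrow> int) \<Rightarrow> nat list \<Rightarrow> int" where
  "phi n f = (\<lambda>u. \<Sum>w \<in> {w \<in> signed_perms n. map (\<lambda>x. nat \<bar>x\<bar>) w = u}. f w)"

text \<open>interior peak set, positions 1-indexed: u_i = u ! (i-1)\<close>
definition Peak0 :: "nat list \<Rightarrow> nat set" where
  "Peak0 u = {i. 2 \<le> i \<and> i + 1 \<le> length u \<and>
      u ! (i - 2) < u ! (i - 1) \<and> u ! (i - 1) > u ! i}"

definition F0 :: "nat \<Rightarrow> nat set set" where
  "F0 n = {F. F \<subseteq> {2..n - 1} \<and> (\<forall>i\<in>F. i + 1 \<notin> F)}"

definition P0 :: "nat \<Rightarrow> nat set \<Rightarrow> nat list \<Rightarrow> int" where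
  "P0 n F = (\<lambda>u. if u \<in> perms n \<and> Peak0 u = F then 1 else 0)"

end

theory Submission
  imports Defs
begin

lemma card_lists_prod:
  assumes "\<forall>k. finite (A k)"
  shows "card {w. length w = m \<and> (\<forall>k<m. w!k \<in> A k)} = (\<Prod>k<m. card (A k))"
proof (induction m)
  case 0
  have "{w. length w = 0 \<and> (\<forall>k<0. w!k \<in> A k)} = {[]}" by auto
  then show ?case by simp
next
  case (Suc m)
  have eq: "{w. length w = Suc m \<and> (\<forall>k<Suc m. w!k \<in> A k)}
     = (\<lambda>(w,x). w @ [x]) ` ({w. length w = m \<and> (\<forall>k<m. w!k \<in> A k)} \<times> A m)"
  proof
    show "(\<lambda>(w,x). w @ [x]) ` ({w. length w = m \<and> (\<forall>k<m. w!k \<in> A k)} \<times> A m)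
      \<subseteq> {w. length w = Suc m \<and> (\<forall>k<Suc m. w!k \<in> A k)}"
    proof
      fix p assume "p \<in> (\<lambda>(w,x). w @ [x]) ` ({w. length w = m \<and> (\<forall>k<m. w!k \<in> A k)} \<times> A m)"
      then obtain w x where p: "p = w @ [x]" and w: "length w = m" "\<forall>k<m. w!k \<in> A k" and x: "x \<in> A m"
        by auto
      have "\<forall>k<Suc m. p!k \<in> A k"
      proof (intro allI impI)
        fix k assume k: "k < Suc m"
        show "p!k \<in> A k"
        proof (cases "k < m")
          case True then show ?thesis using w p by (simp add: nth_append)
        next
          case False then have "k = m" using k by simp
          then show ?thesis using w p x by (simp add: nth_append)
        qed
      qed
      then show "p \<in> {w. length w = Suc m \<and> (\<forall>k<Suc m. w!k \<in> A k)}" using p w by simp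
    qed
  next
    show "{w. length w = Suc m \<and> (\<forall>k<Suc m. w!k \<in> A k)} \<subseteq>
      (\<lambda>(w,x). w @ [x]) ` ({w. length w = m \<and> (\<forall>k<m. w!k \<in> A k)} \<times> A m)"
    proof
      fix w assume w: "w \<in> {w. length w = Suc m \<and> (\<forall>k<Suc m. w!k \<in> A k)}"
      then have l: "length w = Suc m" by simp
      have "w = take (Suc m) w" using l by simp
      also have "\<dots> = take m w @ [w!m]" by (rule take_Suc_conv_app_nth) (simp add: l)
      finally have e: "w = take m w @ [w!m]" .
      have "(take m w, w!m) \<in> {w. length w = m \<and> (\<forall>k<m. w!k \<in> A k)} \<times> A m"
        using w by auto
      then show "w \<in> (\<lambda>(w,x). w @ [x]) ` ({w. length w = m \<and> (\<forall>k<m. w!k \<in> A k)} \<times> A m)"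
        by (rule image_eqI[rotated]) (simp add: e[symmetric])
    qed
  qed
  have inj: "inj_on (\<lambda>(w,x). w @ [x]) ({w. length w = m \<and> (\<forall>k<m. w!k \<in> A k)} \<times> A m)"
    by (rule inj_onI) auto
  have "card {w. length w = Suc m \<and> (\<forall>k<Suc m. w!k \<in> A k)}
     = card ({w. length w = m \<and> (\<forall>k<m. w!k \<in> A k)} \<times> A m)"
    by (simp only: eq card_image[OF inj])
  also have "\<dots> = card {w. length w = m \<and> (\<forall>k<m. w!k \<in> A k)} * card (A m)"
    by (rule card_cartesian_product)
  also have "\<dots> = (\<Prod>k<Suc m. card (A k))"
    by (simp add: Suc.IH)
  finally show ?case .
qed

definition W :: "nat list \<Rightarrow> int list set" where
  "W u = {w. length w = length u \<and> (\<forall>k<length u. w!k = int (u!k) \<or> w!k = - int (u!k))}"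

lemma perms_pos: "u \<in> perms n \<Longrightarrow> k < length u \<Longrightarrow> u!k > 0"
proof -
  assume u: "u \<in> perms n" and k: "k < length u"
  have "u!k \<in> set u" using k by (rule nth_mem)
  then show "u!k > 0" using u unfolding perms_def by auto
qed

lemma perms_len: "u \<in> perms n \<Longrightarrow> length u = n"
  unfolding perms_def by auto

lemma perms_dist: "u \<in> perms n \<Longrightarrow> distinct u"
  unfolding perms_def by auto

lemma fiber_eq:
  assumes u: "u \<in> perms n"
  shows "{w \<in> signed_perms n. map (\<lambda>x. nat \<bar>x\<bar>) w = u} = W u"
proof
  show "{w \<in> signed_perms n. map (\<lambda>x. nat \<bar>x\<bar>) w = u} \<subseteq> W u"
  proof
    fix w assume "w \<in> {w \<in> signed_perms n. map (\<lambda>x. nat \<bar>x\<bar>) w = u}"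
    then have l: "length w = length u" and e: "\<And>k. k < length u \<Longrightarrow> nat \<bar>w!k\<bar> = u!k"
      by auto
    show "w \<in> W u" unfolding W_def using l e by force
  qed
next
  show "W u \<subseteq> {w \<in> signed_perms n. map (\<lambda>x. nat \<bar>x\<bar>) w = u}"
  proof
    fix w assume w: "w \<in> W u"
    have l: "length w = n" using w u unfolding W_def perms_def by auto
    have a: "map abs w = map int u"
      using w unfolding W_def by (auto intro!: nth_equalityI)
    have b: "map (\<lambda>x. nat \<bar>x\<bar>) w = u"
      using w unfolding W_def by (auto intro!: nth_equalityI)
    have d: "distinct (map int u)" using u unfolding perms_def by (simp add: distinct_map)
    have s: "set (map int u) = {1..int n}"
    proof -
      have "set (map int u) = int ` {1..n}" using u unfolding perms_def by simp
      also have "\<dots> = {1..int n}"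
        by (simp add: image_int_atLeastAtMost)
      finally show ?thesis .
    qed
    have s': "set (map abs w) = {1..int n}" unfolding a by (rule s)
    have d': "distinct (map abs w)" unfolding a by (rule d)
    show "w \<in> {w \<in> signed_perms n. map (\<lambda>x. nat \<bar>x\<bar>) w = u}"
      unfolding signed_perms_def using l b d' s' by blast
  qed
qed

lemma fiber_empty:
  assumes "u \<notin> perms n"
  shows "{w \<in> signed_perms n. map (\<lambda>x. nat \<bar>x\<bar>) w = u} = {}"
proof (rule ccontr)
  assume "{w \<in> signed_perms n. map (\<lambda>x. nat \<bar>x\<bar>) w = u} \<noteq> {}"
  then obtain w where w: "w \<in> signed_perms n" and uw: "u = map (\<lambda>x. nat \<bar>x\<bar>) w" by auto
  have l: "length u = n" using w uw unfolding signed_perms_def by auto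
  have d0: "distinct (map abs w)" using w by (simp add: signed_perms_def)
  have inj: "inj_on nat (set (map abs w))" by (auto simp: inj_on_def)
  have "distinct (map nat (map abs w))" by (rule distinct_map[THEN iffD2, OF conjI[OF d0 inj]])
  moreover have "map nat (map abs w) = u" using uw by simp
  ultimately have d: "distinct u" by simp
  have "set u = nat ` set (map abs w)" using uw by (simp add: image_image)
  also have "\<dots> = nat ` {1..int n}" using w unfolding signed_perms_def by simp
  also have "\<dots> = nat ` int ` {1..n}" by (simp add: image_int_atLeastAtMost)
  also have "\<dots> = {1..n}" by (simp add: image_image)
  finally have "set u = {1..n}" .
  then have "u \<in> perms n" using l d unfolding perms_def by auto
  then show False using assms by simp
qed

lemma finite_W: "finite (W u)"
proof -
  define S where "S = (\<lambda>k. int (u!k)) ` {..<length u} \<union> (\<lambda>k. - int (u!k)) ` {..<length u}"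
  have "W u \<subseteq> {w. set w \<subseteq> S \<and> length w = length u}"
  proof
    fix w assume w: "w \<in> W u"
    have "set w \<subseteq> S"
    proof
      fix x assume "x \<in> set w"
      then obtain i where i: "i < length w" "x = w!i" by (auto simp: in_set_conv_nth)
      then have "i < length u" "x = int (u!i) \<or> x = - int (u!i)" using w unfolding W_def by auto
      then show "x \<in> S" unfolding S_def by auto
    qed
    then show "w \<in> {w. set w \<subseteq> S \<and> length w = length u}"
      using w unfolding W_def by blast
  qed
  moreover have "finite {w. set w \<subseteq> S \<and> length w = length u}"
    by (rule finite_lists_length_eq) (simp add: S_def)
  ultimately show ?thesis by (rule finite_subset)
qed


lemma W_len: "w \<in> W u \<Longrightarrow> length w = length u"
  unfolding W_def by auto

lemma W_nth: "w \<in> W u \<Longrightarrow> k < length u \<Longrightarrow> w!k = int (u!k) \<or> w!k = - int (u!k)"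
  unfolding W_def by auto

lemma W_iff: "w \<in> W u \<longleftrightarrow> length w = length u \<and> (\<forall>k<length u. w!k \<in> {int (u!k), - int (u!k)})"
  unfolding W_def by auto

lemma desc_iff:
  assumes w: "w \<in> W u" and d: "distinct u" and pos: "\<forall>k<length u. u!k > 0"
  shows "i \<in> Des w \<longleftrightarrow> i < length u \<and> (if i = 0 then w!0 < 0 else
           (u!i < u!(i-1) \<and> w!(i-1) > 0) \<or> (u!(i-1) < u!i \<and> w!i < 0))"
proof (cases "i < length u")
  case False
  then show ?thesis using W_len[OF w] unfolding Des_def by auto
next
  case True
  note i = True
  show ?thesis
  proof (cases "i = 0")
    case True
    then show ?thesis using i W_len[OF w] unfolding Des_def wval_def by auto
  next
    case False
    have ne: "u!(i-1) \<noteq> u!i" using d i False by (simp add: nth_eq_iff_index_eq)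
    have e: "i \<in> Des w \<longleftrightarrow> w!(i-1) > w!i"
      unfolding Des_def wval_def using i False W_len[OF w] by simp
    have a: "w!(i-1) = int (u!(i-1)) \<or> w!(i-1) = - int (u!(i-1))" using W_nth[OF w] i by simp
    have b: "w!i = int (u!i) \<or> w!i = - int (u!i)" using W_nth[OF w] i by simp
    have pa: "u!(i-1) > 0" using pos i by simp
    have pb: "u!i > 0" using pos i by simp
    have "w!(i-1) > w!i \<longleftrightarrow> (u!i < u!(i-1) \<and> w!(i-1) > 0) \<or> (u!(i-1) < u!i \<and> w!i < 0)"
      using a b
    proof (elim disjE)
      assume "w!(i-1) = int (u!(i-1))" "w!i = int (u!i)"
      then show ?thesis using pa pb ne by simp
    next
      assume "w!(i-1) = int (u!(i-1))" "w!i = - int (u!i)"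
      then show ?thesis using pa pb ne by auto
    next
      assume "w!(i-1) = - int (u!(i-1))" "w!i = int (u!i)"
      then show ?thesis using pa pb ne by auto
    next
      assume "w!(i-1) = - int (u!(i-1))" "w!i = - int (u!i)"
      then show ?thesis using pa pb ne by auto
    qed
    then show ?thesis using e i False by simp
  qed
qed

lemma sum_c:
  fixes u :: "nat list"
  assumes l: "length u = Suc m" and d: "distinct u"
  shows "(\<Sum>k<Suc m. of_bool (0<k \<and> Q k \<and> u!(k-1) < u!k) + of_bool (k+1<Suc m \<and> Q (k+1) \<and> u!(k+1) < u!k))
     = (card {k. k<m \<and> Q (Suc k)} :: nat)"
proof -
  have ne: "\<And>k. k < m \<Longrightarrow> u!k \<noteq> u!(Suc k)" using d l by (simp add: nth_eq_iff_index_eq)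
  have s1: "(\<Sum>k<Suc m. of_bool (0<k \<and> Q k \<and> u!(k-1) < u!k) :: nat)
      = (\<Sum>k<m. of_bool (Q (Suc k) \<and> u!k < u!(Suc k)))"
    by (subst sum.lessThan_Suc_shift) simp
  have s2: "(\<Sum>k<Suc m. of_bool (k+1<Suc m \<and> Q (k+1) \<and> u!(k+1) < u!k) :: nat)
      = (\<Sum>k<m. of_bool (Q (Suc k) \<and> u!(Suc k) < u!k))"
    by (subst sum.lessThan_Suc) (auto intro!: sum.cong)
  have s3: "(\<Sum>k<m. of_bool (Q (Suc k) \<and> u!k < u!(Suc k)) + of_bool (Q (Suc k) \<and> u!(Suc k) < u!k) :: nat)
      = (\<Sum>k<m. of_bool (Q (Suc k)))"
  proof (rule sum.cong)
    fix k assume "k \<in> {..<m}"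
    then have "u!k \<noteq> u!(Suc k)" using ne by simp
    then show "(of_bool (Q (Suc k) \<and> u!k < u!(Suc k)) + of_bool (Q (Suc k) \<and> u!(Suc k) < u!k) :: nat)
      = of_bool (Q (Suc k))" by (cases "u!k < u!(Suc k)") auto
  qed simp
  have s4: "(\<Sum>k<m. of_bool (Q (Suc k)) :: nat) = card {k. k<m \<and> Q (Suc k)}"
  proof -
    have "(\<Sum>k<m. of_bool (Q (Suc k)) :: nat) = card ({..<m} \<inter> {k. Q (Suc k)})" by simp
    also have "{..<m} \<inter> {k. Q (Suc k)} = {k. k<m \<and> Q (Suc k)}" by auto
    finally show ?thesis .
  qed
  show ?thesis
    unfolding sum.distrib s1 s2 using s3 s4 by (simp add: sum.distrib)
qed

lemma Peak0_eq:
  fixes u :: "nat list" shows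
  "Peak0 u = Suc ` {k. 0 < k \<and> k+1 < length u \<and> u!(k-1) < u!k \<and> u!(k+1) < u!k}"
proof
  show "Peak0 u \<subseteq> Suc ` {k. 0 < k \<and> k+1 < length u \<and> u!(k-1) < u!k \<and> u!(k+1) < u!k}"
  proof
    fix i assume "i \<in> Peak0 u"
    then have i: "2 \<le> i" "i + 1 \<le> length u" "u ! (i - 2) < u ! (i - 1)" "u ! (i - 1) > u ! i"
      unfolding Peak0_def by auto
    have e1: "i - 1 - 1 = i - 2" and e2: "i - 1 + 1 = i" and e3: "i = Suc (i - 1)" using i(1) by arith+
    have "i - 1 \<in> {k. 0 < k \<and> k+1 < length u \<and> u!(k-1) < u!k \<and> u!(k+1) < u!k}"
      unfolding mem_Collect_eq e1 e2 using i by simp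
    with e3 show "i \<in> Suc ` {k. 0 < k \<and> k+1 < length u \<and> u!(k-1) < u!k \<and> u!(k+1) < u!k}"
      by (rule image_eqI)
  qed
next
  show "Suc ` {k. 0 < k \<and> k+1 < length u \<and> u!(k-1) < u!k \<and> u!(k+1) < u!k} \<subseteq> Peak0 u"
  proof
    fix i assume "i \<in> Suc ` {k. 0 < k \<and> k+1 < length u \<and> u!(k-1) < u!k \<and> u!(k+1) < u!k}"
    then obtain k where k: "i = Suc k" "0 < k" "k+1 < length u" "u!(k-1) < u!k" "u!(k+1) < u!k" by blast
    have e1: "i - 2 = k - 1" and e2: "i - 1 = k" using k by arith+
    show "i \<in> Peak0 u" unfolding Peak0_def mem_Collect_eq e1 e2 using k by simp
  qed
qed

lemma Peak0_F0: "length u = n \<Longrightarrow> Peak0 u \<in> F0 n"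
  unfolding F0_def Peak0_def by auto

lemma finite_F0: "finite (F0 n)"
proof -
  have "F0 n \<subseteq> Pow {2..n-1}" unfolding F0_def by auto
  then show ?thesis by (rule finite_subset) simp
qed

lemma sumP0:
  assumes u: "u \<in> perms n"
  shows "(\<Sum>F\<in>{F \<in> F0 n. F \<subseteq> T}. P0 n F u) = (if Peak0 u \<subseteq> T then 1 else 0)"
proof -
  have fin: "finite {F \<in> F0 n. F \<subseteq> T}" using finite_F0 by simp
  have "(\<Sum>F\<in>{F \<in> F0 n. F \<subseteq> T}. P0 n F u) = (\<Sum>F\<in>{F \<in> F0 n. F \<subseteq> T}. if Peak0 u = F then 1 else 0)"
    unfolding P0_def using u by simp
  also have "\<dots> = (if Peak0 u \<in> {F \<in> F0 n. F \<subseteq> T} then 1 else 0)"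
    using fin by (rule sum.delta')
  also have "\<dots> = (if Peak0 u \<subseteq> T then 1 else 0)"
    using Peak0_F0[OF perms_len[OF u]] by simp
  finally show ?thesis .
qed

lemma sumP0':
  assumes u: "u \<in> perms n"
  shows "(\<Sum>F\<in>{F \<in> F0 n. F \<subseteq> T}. 2 ^ (1 + card F) * P0 n F u) =
     (if Peak0 u \<subseteq> T then 2 ^ (1 + card (Peak0 u)) else 0)"
proof -
  have fin: "finite {F \<in> F0 n. F \<subseteq> T}" using finite_F0 by simp
  have "(\<Sum>F\<in>{F \<in> F0 n. F \<subseteq> T}. 2 ^ (1 + card F) * P0 n F u) =
     (\<Sum>F\<in>{F \<in> F0 n. F \<subseteq> T}. if Peak0 u = F then 2 ^ (1 + card F) else 0)"
    unfolding P0_def using u by (intro sum.cong) auto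
  also have "\<dots> = (if Peak0 u \<in> {F \<in> F0 n. F \<subseteq> T} then 2 ^ (1 + card (Peak0 u)) else 0)"
    using fin by (rule sum.delta')
  also have "\<dots> = (if Peak0 u \<subseteq> T then 2 ^ (1 + card (Peak0 u)) else 0)"
    using Peak0_F0[OF perms_len[OF u]] by simp
  finally show ?thesis .
qed

lemma card_pm:
  assumes "(a::int) > 0"
  shows "card {x. (x = a \<or> x = -a) \<and> (P1 \<longrightarrow> x > 0) \<and> (P2 \<longrightarrow> x < 0)} =
    (if P1 \<and> P2 then 0 else if P1 \<or> P2 then 1 else 2)"
proof -
  consider "P1 \<and> P2" | "P1 \<and> \<not>P2" | "\<not>P1 \<and> P2" | "\<not>P1 \<and> \<not>P2" by blast
  then show ?thesis
  proof cases
    case 1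
    then have "{x. (x = a \<or> x = -a) \<and> (P1 \<longrightarrow> x > 0) \<and> (P2 \<longrightarrow> x < 0)} = {}" by auto
    then show ?thesis using 1 by simp
  next
    case 2
    then have "{x. (x = a \<or> x = -a) \<and> (P1 \<longrightarrow> x > 0) \<and> (P2 \<longrightarrow> x < 0)} = {a}" using assms by auto
    then show ?thesis using 2 by simp
  next
    case 3
    then have "{x. (x = a \<or> x = -a) \<and> (P1 \<longrightarrow> x > 0) \<and> (P2 \<longrightarrow> x < 0)} = {-a}" using assms by auto
    then show ?thesis using 3 by simp
  next
    case 4
    then have "{x. (x = a \<or> x = -a) \<and> (P1 \<longrightarrow> x > 0) \<and> (P2 \<longrightarrow> x < 0)} = {a, -a}" using assms by auto
    then show ?thesis using 4 assms by simp
  qed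
qed

lemma card_pm2:
  assumes "(a::int) > 0"
  shows "card {x. (x = a \<or> x = -a) \<and> (P1 \<longrightarrow> (x < 0 \<longleftrightarrow> Q1)) \<and> (P2 \<longrightarrow> (x > 0 \<longleftrightarrow> Q2))} =
    (if P1 \<and> P2 then (if Q1 = Q2 then 0 else 1) else if P1 \<or> P2 then 1 else 2)"
proof -
  let ?S = "{x. (x = a \<or> x = -a) \<and> (P1 \<longrightarrow> (x < 0 \<longleftrightarrow> Q1)) \<and> (P2 \<longrightarrow> (x > 0 \<longleftrightarrow> Q2))}"
  consider "P1 \<and> P2 \<and> Q1 = Q2" | "P1 \<and> P2 \<and> Q1 \<and> \<not> Q2" | "P1 \<and> P2 \<and> \<not> Q1 \<and> Q2"
    | "P1 \<and> \<not>P2 \<and> Q1" | "P1 \<and> \<not>P2 \<and> \<not> Q1" | "\<not>P1 \<and> P2 \<and> Q2" | "\<not>P1 \<and> P2 \<and> \<not> Q2"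
    | "\<not>P1 \<and> \<not>P2" by blast
  then show ?thesis
  proof cases
    case 1
    then have "?S = {}" using assms by auto
    then show ?thesis using 1 by simp
  next
    case 2
    then have "?S = {-a}" using assms by auto
    then show ?thesis using 2 by simp
  next
    case 3
    then have "?S = {a}" using assms by auto
    then show ?thesis using 3 by simp
  next
    case 4
    then have "?S = {-a}" using assms by auto
    then show ?thesis using 4 by simp
  next
    case 5
    then have "?S = {a}" using assms by auto
    then show ?thesis using 5 by simp
  next
    case 6
    then have "?S = {a}" using assms by auto
    then show ?thesis using 6 by simp
  next
    case 7
    then have "?S = {-a}" using assms by auto
    then show ?thesis using 7 by simp
  next
    case 8
    then have "?S = {a, -a}" using assms by auto
    then show ?thesis using 8 assms by simp
  qed
qed


lemma prod_pow_cancel: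
  assumes h: "\<forall>k<n. (f k::nat) * 2 ^ (c k) = 2 ^ (e k)"
    and s: "(\<Sum>k<n. c k) + t = (\<Sum>k<n. e k)"
  shows "(\<Prod>k<n. f k) = 2 ^ t"
proof -
  have "(\<Prod>k<n. f k) * 2 ^ (\<Sum>k<n. c k) = (\<Prod>k<n. f k) * (\<Prod>k<n. 2 ^ c k)"
    by (simp add: power_sum)
  also have "\<dots> = (\<Prod>k<n. f k * 2 ^ c k)" by (simp add: prod.distrib)
  also have "\<dots> = (\<Prod>k<n. 2 ^ e k)" using h by (intro prod.cong) auto
  also have "\<dots> = 2 ^ (\<Sum>k<n. e k)" by (simp add: power_sum)
  also have "\<dots> = 2 ^ t * 2 ^ (\<Sum>k<n. c k)" using s by (simp add: power_add[symmetric] add.commute)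
  finally show ?thesis by simp
qed

lemma phi_card:
  assumes u: "u \<in> perms n" and f: "\<forall>w \<in> signed_perms n. f w = (if P w then 1 else 0)"
  shows "phi n f u = int (card {w \<in> W u. P w})"
proof -
  have sub: "\<And>w. w \<in> W u \<Longrightarrow> w \<in> signed_perms n" using fiber_eq[OF u] by blast
  have "phi n f u = (\<Sum>w\<in>W u. f w)" unfolding phi_def fiber_eq[OF u] by simp
  also have "\<dots> = (\<Sum>w\<in>W u. of_bool (P w))" using f sub by (intro sum.cong) auto
  also have "\<dots> = int (card (W u \<inter> {w. P w}))" using finite_W by simp
  also have "W u \<inter> {w. P w} = {w \<in> W u. P w}" by auto
  finally show ?thesis .
qed

lemma cardJ:
  assumes J: "J \<subseteq> {1..m}"
  shows "card {k. k<m \<and> Suc k \<notin> J} + card J = m"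
proof -
  have eJ: "J = Suc ` {k. k<m \<and> Suc k \<in> J}"
  proof
    show "J \<subseteq> Suc ` {k. k<m \<and> Suc k \<in> J}"
    proof
      fix j assume j: "j \<in> J"
      then have "1 \<le> j" "j \<le> m" using J by auto
      then have "j = Suc (j - 1)" "j - 1 \<in> {k. k<m \<and> Suc k \<in> J}" using j by auto
      then show "j \<in> Suc ` {k. k<m \<and> Suc k \<in> J}" by (rule image_eqI)
    qed
  qed auto
  have cJ: "card J = card {k. k<m \<and> Suc k \<in> J}"
    by (subst eJ) (rule card_image, simp)
  have "{k. k<m \<and> Suc k \<notin> J} \<union> {k. k<m \<and> Suc k \<in> J} = {..<m}" by auto
  moreover have "card ({k. k<m \<and> Suc k \<notin> J} \<union> {k. k<m \<and> Suc k \<in> J})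
      = card {k. k<m \<and> Suc k \<notin> J} + card {k. k<m \<and> Suc k \<in> J}"
    by (rule card_Un_disjoint) auto
  ultimately show ?thesis using cJ by simp
qed

lemma X_main:
  assumes u: "u \<in> perms n" and J: "J \<subseteq> {1..n-1}" and n: "1 \<le> n"
  shows "phi n (X0 n J) u = 2^(1+card J) * (if Peak0 u \<subseteq> J \<union> (\<lambda>j. j+1) ` J then 1 else 0)"
proof -
  have l: "length u = n" using perms_len[OF u] .
  have d: "distinct u" using perms_dist[OF u] .
  have pos: "\<forall>k<length u. u!k > 0" using perms_pos[OF u] by blast
  define c1 where "c1 k = (0<k \<and> k\<notin>J \<and> u!(k-1) < u!k)" for k
  define c2 where "c2 k = (k+1<n \<and> k+1\<notin>J \<and> u!(k+1) < u!k)" for k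
  define A where "A k = {x::int. (x = int (u!k) \<or> x = - int (u!k)) \<and> (c1 k \<longrightarrow> x>0) \<and> (c2 k \<longrightarrow> x<0)}" for k
  have phi1: "phi n (X0 n J) u = int (card {w\<in>W u. Des w \<subseteq> insert 0 J})"
    by (rule phi_card[OF u]) (simp add: X0_def Xsum_def)
  have key: "Des w \<subseteq> insert 0 J \<longleftrightarrow> (\<forall>k<n. (c1 k \<longrightarrow> w!k>0) \<and> (c2 k \<longrightarrow> w!k<0))"
    if w: "w \<in> W u" for w
  proof -
    have nz: "\<And>k. k<n \<Longrightarrow> w!k \<noteq> 0" using W_nth[OF w] pos l by fastforce
    have D: "Des w \<subseteq> insert 0 J \<longleftrightarrow>
      (\<forall>i. 0<i \<and> i<n \<and> i\<notin>J \<longrightarrow> \<not>((u!i < u!(i-1) \<and> w!(i-1) > 0) \<or> (u!(i-1) < u!i \<and> w!i < 0)))"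
    proof
      assume H: "Des w \<subseteq> insert 0 J"
      show "\<forall>i. 0<i \<and> i<n \<and> i\<notin>J \<longrightarrow> \<not>((u!i < u!(i-1) \<and> w!(i-1) > 0) \<or> (u!(i-1) < u!i \<and> w!i < 0))"
      proof (intro allI impI notI)
        fix i assume i: "0<i \<and> i<n \<and> i\<notin>J"
          and c: "(u!i < u!(i-1) \<and> w!(i-1) > 0) \<or> (u!(i-1) < u!i \<and> w!i < 0)"
        have "i < length u \<and> (if i = 0 then w!0 < 0 else
           (u!i < u!(i-1) \<and> w!(i-1) > 0) \<or> (u!(i-1) < u!i \<and> w!i < 0))"
          using i c l by simp
        then have "i \<in> Des w" using desc_iff[OF w d pos, of i] by blast
        then show False using H i by auto
      qed
    next
      assume H: "\<forall>i. 0<i \<and> i<n \<and> i\<notin>J \<longrightarrow> \<not>((u!i < u!(i-1) \<and> w!(i-1) > 0) \<or> (u!(i-1) < u!i \<and> w!i < 0))"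
      show "Des w \<subseteq> insert 0 J"
      proof
        fix i assume i: "i \<in> Des w"
        show "i \<in> insert 0 J"
        proof (rule ccontr)
          assume ni: "i \<notin> insert 0 J"
          have i0: "i \<noteq> 0" using ni by simp
          have "i < length u \<and> (if i = 0 then w!0 < 0 else
           (u!i < u!(i-1) \<and> w!(i-1) > 0) \<or> (u!(i-1) < u!i \<and> w!i < 0))"
            using desc_iff[OF w d pos, of i] i by blast
          then have "i < n \<and> ((u!i < u!(i-1) \<and> w!(i-1) > 0) \<or> (u!(i-1) < u!i \<and> w!i < 0))"
            using i0 l by (simp only: if_False)
          then show False using H[rule_format, of i] i0 ni by simp
        qed
      qed
    qed
    have E: "(\<forall>i. 0<i \<and> i<n \<and> i\<notin>J \<longrightarrow> \<not>((u!i < u!(i-1) \<and> w!(i-1) > 0) \<or> (u!(i-1) < u!i \<and> w!i < 0)))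
       \<longleftrightarrow> (\<forall>k<n. (c1 k \<longrightarrow> w!k>0) \<and> (c2 k \<longrightarrow> w!k<0))"
    proof
      assume H: "\<forall>i. 0<i \<and> i<n \<and> i\<notin>J \<longrightarrow> \<not>((u!i < u!(i-1) \<and> w!(i-1) > 0) \<or> (u!(i-1) < u!i \<and> w!i < 0))"
      show "\<forall>k<n. (c1 k \<longrightarrow> w!k>0) \<and> (c2 k \<longrightarrow> w!k<0)"
      proof (intro allI impI conjI)
        fix k assume k: "k<n"
        {
          assume "c1 k"
          then have a: "0<k" "k\<notin>J" "u!(k-1) < u!k" unfolding c1_def by auto
          then have "\<not> (w!k < 0)" using H k by auto
          then show "w!k > 0" using nz[OF k] by simp
        }
        {
          assume "c2 k"
          then have a: "k+1<n" "k+1\<notin>J" "u!(k+1) < u!k" unfolding c2_def by auto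
          have "\<not>((u!(k+1) < u!(k+1-1) \<and> w!(k+1-1) > 0) \<or> (u!(k+1-1) < u!(k+1) \<and> w!(k+1) < 0))"
            using H[rule_format, of "k+1"] a by simp
          then have "\<not> (w!k > 0)" using a by simp
          then show "w!k < 0" using nz[OF k] by simp
        }
      qed
    next
      assume H: "\<forall>k<n. (c1 k \<longrightarrow> w!k>0) \<and> (c2 k \<longrightarrow> w!k<0)"
      show "\<forall>i. 0<i \<and> i<n \<and> i\<notin>J \<longrightarrow> \<not>((u!i < u!(i-1) \<and> w!(i-1) > 0) \<or> (u!(i-1) < u!i \<and> w!i < 0))"
      proof (intro allI impI notI)
        fix i assume i: "0<i \<and> i<n \<and> i\<notin>J"
          and c: "(u!i < u!(i-1) \<and> w!(i-1) > 0) \<or> (u!(i-1) < u!i \<and> w!i < 0)"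
        have e: "i - 1 + 1 = i" "i - 1 < n" using i by auto
        from c show False
        proof
          assume a: "u!i < u!(i-1) \<and> w!(i-1) > 0"
          have "c2 (i-1)" unfolding c2_def e using i a by simp
          then have "w!(i-1) < 0" using H[rule_format, of "i-1"] e by simp
          then show False using a by simp
        next
          assume a: "u!(i-1) < u!i \<and> w!i < 0"
          have "c1 i" unfolding c1_def using i a by simp
          then have "w!i > 0" using H[rule_format, of i] i by simp
          then show False using a by simp
        qed
      qed
    qed
    show ?thesis using D E by simp
  qed
  have seteq: "{w\<in>W u. Des w \<subseteq> insert 0 J} = {w. length w = n \<and> (\<forall>k<n. w!k \<in> A k)}"
  proof (intro set_eqI)
    fix w
    show "w \<in> {w\<in>W u. Des w \<subseteq> insert 0 J} \<longleftrightarrow> w \<in> {w. length w = n \<and> (\<forall>k<n. w!k \<in> A k)}"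
    proof
      assume "w \<in> {w\<in>W u. Des w \<subseteq> insert 0 J}"
      then have w: "w \<in> W u" and D: "Des w \<subseteq> insert 0 J" by auto
      have "\<forall>k<n. (c1 k \<longrightarrow> w!k>0) \<and> (c2 k \<longrightarrow> w!k<0)" using key[OF w] D by simp
      then show "w \<in> {w. length w = n \<and> (\<forall>k<n. w!k \<in> A k)}"
        using W_nth[OF w] W_len[OF w] l unfolding A_def by auto
    next
      assume "w \<in> {w. length w = n \<and> (\<forall>k<n. w!k \<in> A k)}"
      then have lw: "length w = n" and a: "\<forall>k<n. w!k \<in> A k" by auto
      have w: "w \<in> W u" unfolding W_def using lw l a unfolding A_def by auto
      have "\<forall>k<n. (c1 k \<longrightarrow> w!k>0) \<and> (c2 k \<longrightarrow> w!k<0)" using a unfolding A_def by auto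
      then show "w \<in> {w\<in>W u. Des w \<subseteq> insert 0 J}" using key[OF w] w by simp
    qed
  qed
  have finA: "\<forall>k. finite (A k)"
  proof
    fix k have "A k \<subseteq> {int (u!k), - int (u!k)}" unfolding A_def by auto
    then show "finite (A k)" by (rule finite_subset) simp
  qed
  have cardA: "card (A k) = (if c1 k \<and> c2 k then 0 else if c1 k \<or> c2 k then 1 else 2)" if k: "k < n" for k
    unfolding A_def by (rule card_pm) (use pos k l in simp)
  have phi2: "phi n (X0 n J) u = int (\<Prod>k<n. card (A k))"
    unfolding phi1 seteq card_lists_prod[OF finA] ..
  have sucimg: "\<And>k. Suc k \<in> (\<lambda>j. j+1) ` J \<longleftrightarrow> k \<in> J" by auto
  have peak: "Peak0 u \<subseteq> J \<union> (\<lambda>j. j+1) ` J \<longleftrightarrow> \<not>(\<exists>k<n. c1 k \<and> c2 k)"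
  proof
    assume H: "Peak0 u \<subseteq> J \<union> (\<lambda>j. j+1) ` J"
    show "\<not>(\<exists>k<n. c1 k \<and> c2 k)"
    proof
      assume "\<exists>k<n. c1 k \<and> c2 k"
      then obtain k where k: "k<n" "c1 k" "c2 k" by blast
      then have "Suc k \<in> Peak0 u" unfolding Peak0_eq c1_def c2_def using l by auto
      then have "Suc k \<in> J \<union> (\<lambda>j. j+1) ` J" using H by blast
      then have "Suc k \<in> J \<or> k \<in> J" using sucimg by blast
      then show False using k unfolding c1_def c2_def by auto
    qed
  next
    assume H: "\<not>(\<exists>k<n. c1 k \<and> c2 k)"
    show "Peak0 u \<subseteq> J \<union> (\<lambda>j. j+1) ` J"
    proof
      fix p assume "p \<in> Peak0 u"
      then obtain k where p: "p = Suc k" and k: "0 < k" "k+1 < n" "u!(k-1) < u!k" "u!(k+1) < u!k"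
        unfolding Peak0_eq l by blast
      have "\<not>(c1 k \<and> c2 k)" using H k by auto
      then have "k \<in> J \<or> Suc k \<in> J" using k unfolding c1_def c2_def by auto
      then show "p \<in> J \<union> (\<lambda>j. j+1) ` J" using p sucimg by blast
    qed
  qed
  show ?thesis
  proof (cases "\<exists>k<n. c1 k \<and> c2 k")
    case True
    then obtain k where k: "k<n" "c1 k \<and> c2 k" by blast
    then have "card (A k) = 0" using cardA by simp
    then have "(\<Prod>k<n. card (A k)) = 0" using k by (auto intro: prod_zero)
    then show ?thesis using phi2 peak True by simp
  next
    case False
    obtain m where m: "n = Suc m" using n by (cases n) auto
    have h: "\<forall>k<n. card (A k) * 2 ^ (of_bool (c1 k) + of_bool (c2 k)) = 2 ^ 1"
      using cardA False by auto
    have s1: "(\<Sum>k<n. of_bool (c1 k) + of_bool (c2 k) :: nat) = card {k. k<m \<and> Suc k \<notin> J}"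
      unfolding m c1_def c2_def using sum_c[of u m "\<lambda>k. k \<notin> J"] l m d by simp
    have s2: "card {k. k<m \<and> Suc k \<notin> J} + card J = m" using cardJ[of J m] J m by simp
    have "(\<Sum>k<n. of_bool (c1 k) + of_bool (c2 k) :: nat) + (1 + card J) = (\<Sum>k<n. 1)"
      using s1 s2 m by simp
    then have "(\<Prod>k<n. card (A k)) = 2 ^ (1 + card J)"
      by (rule prod_pow_cancel[OF h])
    then show ?thesis using phi2 peak False by simp
  qed
qed


lemma Y_main:
  assumes u: "u \<in> perms n" and J: "J \<subseteq> {1..n-1}" and n: "1 \<le> n"
  shows "phi n (Y0 n J) u = (if Peak0 u \<subseteq> (J - (\<lambda>j. j+1) ` J) \<union> ((\<lambda>j. j+1) ` J - J)
           then 2^(1+card (Peak0 u)) else 0)"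
proof -
  have l: "length u = n" using perms_len[OF u] .
  have d: "distinct u" using perms_dist[OF u] .
  have pos: "\<forall>k<length u. u!k > 0" using perms_pos[OF u] by blast
  have J0: "0 \<notin> J" using J by auto
  define d1 where "d1 k = (0<k \<and> u!(k-1) < u!k)" for k
  define d2 where "d2 k = (k+1<n \<and> u!(k+1) < u!k)" for k
  define A where "A k = {x::int. (x = int (u!k) \<or> x = - int (u!k)) \<and> (d1 k \<longrightarrow> (x<0 \<longleftrightarrow> k \<in> J)) \<and> (d2 k \<longrightarrow> (x>0 \<longleftrightarrow> k+1 \<in> J))}" for k
  have Yw: "\<forall>w\<in>signed_perms n. Y0 n J w = (if Des w - {0} = J then 1 else 0)"
  proof
    fix w assume w: "w \<in> signed_perms n"
    have "Des w - {0} = J \<longleftrightarrow> Des w = insert 0 J \<or> Des w = J" using J0 by blast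
    moreover have "\<not> (Des w = insert 0 J \<and> Des w = J)" using J0 by blast
    ultimately show "Y0 n J w = (if Des w - {0} = J then 1 else 0)"
      unfolding Y0_def Ysum_def using w by auto
  qed
  have phi1: "phi n (Y0 n J) u = int (card {w\<in>W u. Des w - {0} = J})"
    by (rule phi_card[OF u Yw])
  have key: "Des w - {0} = J \<longleftrightarrow> (\<forall>k<n. (d1 k \<longrightarrow> (w!k<0 \<longleftrightarrow> k \<in> J)) \<and> (d2 k \<longrightarrow> (w!k>0 \<longleftrightarrow> k+1 \<in> J)))"
    if w: "w \<in> W u" for w
  proof -
    have nz: "\<And>k. k<n \<Longrightarrow> w!k \<noteq> 0" using W_nth[OF w] pos l by fastforce
    have des: "i \<in> Des w \<longleftrightarrow> ((u!i < u!(i-1) \<and> w!(i-1) > 0) \<or> (u!(i-1) < u!i \<and> w!i < 0))"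
      if i: "0 < i" "i < n" for i
    proof -
      have "i \<noteq> 0" using i by simp
      then show ?thesis using desc_iff[OF w d pos, of i] i l by (simp only: if_False) simp
    qed
    have D: "Des w - {0} = J \<longleftrightarrow>
      (\<forall>i. 0<i \<and> i<n \<longrightarrow> (((u!i < u!(i-1) \<and> w!(i-1) > 0) \<or> (u!(i-1) < u!i \<and> w!i < 0)) \<longleftrightarrow> i \<in> J))"
    proof
      assume H: "Des w - {0} = J"
      show "\<forall>i. 0<i \<and> i<n \<longrightarrow> (((u!i < u!(i-1) \<and> w!(i-1) > 0) \<or> (u!(i-1) < u!i \<and> w!i < 0)) \<longleftrightarrow> i \<in> J)"
      proof (intro allI impI)
        fix i assume i: "0<i \<and> i<n"
        have "i \<in> J \<longleftrightarrow> i \<in> Des w" using H i by auto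
        then show "((u!i < u!(i-1) \<and> w!(i-1) > 0) \<or> (u!(i-1) < u!i \<and> w!i < 0)) \<longleftrightarrow> i \<in> J"
          using des[of i] i by simp
      qed
    next
      assume H: "\<forall>i. 0<i \<and> i<n \<longrightarrow> (((u!i < u!(i-1) \<and> w!(i-1) > 0) \<or> (u!(i-1) < u!i \<and> w!i < 0)) \<longleftrightarrow> i \<in> J)"
      show "Des w - {0} = J"
      proof (intro set_eqI iffI)
        fix i assume i: "i \<in> Des w - {0}"
        then have i': "0 < i" "i < n" using desc_iff[OF w d pos, of i] l by auto
        then show "i \<in> J" using H[rule_format, of i] des[OF i'] i by simp
      next
        fix i assume i: "i \<in> J"
        then have "i \<in> {1..n-1}" using J by blast
        then have i': "0 < i" "i < n" using n by auto
        then show "i \<in> Des w - {0}" using H[rule_format, of i] des[OF i'] i by simp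
      qed
    qed
    have E: "(\<forall>i. 0<i \<and> i<n \<longrightarrow> (((u!i < u!(i-1) \<and> w!(i-1) > 0) \<or> (u!(i-1) < u!i \<and> w!i < 0)) \<longleftrightarrow> i \<in> J))
       \<longleftrightarrow> (\<forall>k<n. (d1 k \<longrightarrow> (w!k<0 \<longleftrightarrow> k \<in> J)) \<and> (d2 k \<longrightarrow> (w!k>0 \<longleftrightarrow> k+1 \<in> J)))"
    proof
      assume H: "\<forall>i. 0<i \<and> i<n \<longrightarrow> (((u!i < u!(i-1) \<and> w!(i-1) > 0) \<or> (u!(i-1) < u!i \<and> w!i < 0)) \<longleftrightarrow> i \<in> J)"
      show "\<forall>k<n. (d1 k \<longrightarrow> (w!k<0 \<longleftrightarrow> k \<in> J)) \<and> (d2 k \<longrightarrow> (w!k>0 \<longleftrightarrow> k+1 \<in> J))"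
      proof (intro allI impI conjI)
        fix k assume k: "k<n"
        {
          assume "d1 k"
          then have a: "0<k" "u!(k-1) < u!k" unfolding d1_def by auto
          then show "w!k < 0 \<longleftrightarrow> k \<in> J" using H[rule_format, of k] k by auto
        }
        {
          assume "d2 k"
          then have a: "k+1<n" "u!(k+1) < u!k" unfolding d2_def by auto
          then show "w!k > 0 \<longleftrightarrow> k+1 \<in> J" using H[rule_format, of "k+1"] by auto
        }
      qed
    next
      assume H: "\<forall>k<n. (d1 k \<longrightarrow> (w!k<0 \<longleftrightarrow> k \<in> J)) \<and> (d2 k \<longrightarrow> (w!k>0 \<longleftrightarrow> k+1 \<in> J))"
      show "\<forall>i. 0<i \<and> i<n \<longrightarrow> (((u!i < u!(i-1) \<and> w!(i-1) > 0) \<or> (u!(i-1) < u!i \<and> w!i < 0)) \<longleftrightarrow> i \<in> J)"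
      proof (intro allI impI)
        fix i assume i: "0<i \<and> i<n"
        have e: "i - 1 + 1 = i" "i - 1 < n" using i by auto
        have il: "i - 1 < length u" "i < length u" using i l by auto
        have ne: "u!(i-1) \<noteq> u!i" using nth_eq_iff_index_eq[OF d il] i by auto
        show "((u!i < u!(i-1) \<and> w!(i-1) > 0) \<or> (u!(i-1) < u!i \<and> w!i < 0)) \<longleftrightarrow> i \<in> J"
        proof (cases "u!i < u!(i-1)")
          case True
          have "d2 (i-1)" unfolding d2_def e using i True by simp
          then have "w!(i-1) > 0 \<longleftrightarrow> i \<in> J" using H[rule_format, of "i-1"] e by simp
          then show ?thesis using True by auto
        next
          case False
          then have lt: "u!(i-1) < u!i" using ne by simp
          have "d1 i" unfolding d1_def using i lt by simp
          then have "w!i < 0 \<longleftrightarrow> i \<in> J" using H[rule_format, of i] i by simp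
          then show ?thesis using False lt by auto
        qed
      qed
    qed
    show ?thesis using D E by simp
  qed
  have seteq: "{w\<in>W u. Des w - {0} = J} = {w. length w = n \<and> (\<forall>k<n. w!k \<in> A k)}"
  proof (intro set_eqI)
    fix w
    show "w \<in> {w\<in>W u. Des w - {0} = J} \<longleftrightarrow> w \<in> {w. length w = n \<and> (\<forall>k<n. w!k \<in> A k)}"
    proof
      assume "w \<in> {w\<in>W u. Des w - {0} = J}"
      then have w: "w \<in> W u" and D: "Des w - {0} = J" by auto
      have "\<forall>k<n. (d1 k \<longrightarrow> (w!k<0 \<longleftrightarrow> k \<in> J)) \<and> (d2 k \<longrightarrow> (w!k>0 \<longleftrightarrow> k+1 \<in> J))"
        using key[OF w] D by simp
      then show "w \<in> {w. length w = n \<and> (\<forall>k<n. w!k \<in> A k)}"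
        using W_nth[OF w] W_len[OF w] l unfolding A_def by auto
    next
      assume "w \<in> {w. length w = n \<and> (\<forall>k<n. w!k \<in> A k)}"
      then have lw: "length w = n" and a: "\<forall>k<n. w!k \<in> A k" by auto
      have w: "w \<in> W u" unfolding W_def using lw l a unfolding A_def by auto
      have "\<forall>k<n. (d1 k \<longrightarrow> (w!k<0 \<longleftrightarrow> k \<in> J)) \<and> (d2 k \<longrightarrow> (w!k>0 \<longleftrightarrow> k+1 \<in> J))"
        using a unfolding A_def by auto
      then show "w \<in> {w\<in>W u. Des w - {0} = J}" using key[OF w] w by simp
    qed
  qed
  have finA: "\<forall>k. finite (A k)"
  proof
    fix k have "A k \<subseteq> {int (u!k), - int (u!k)}" unfolding A_def by auto
    then show "finite (A k)" by (rule finite_subset) simp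
  qed
  have cardA: "card (A k) = (if d1 k \<and> d2 k then (if (k \<in> J) = (k+1 \<in> J) then 0 else 1)
      else if d1 k \<or> d2 k then 1 else 2)" if k: "k < n" for k
    unfolding A_def by (rule card_pm2) (use pos k l in simp)
  have phi2: "phi n (Y0 n J) u = int (\<Prod>k<n. card (A k))"
    unfolding phi1 seteq card_lists_prod[OF finA] ..
  have sucimg: "\<And>k. Suc k \<in> (\<lambda>j. j+1) ` J \<longleftrightarrow> k \<in> J" by auto
  let ?S = "(J - (\<lambda>j. j+1) ` J) \<union> ((\<lambda>j. j+1) ` J - J)"
  have memS: "\<And>k. Suc k \<in> ?S \<longleftrightarrow> (k \<in> J) \<noteq> (Suc k \<in> J)" using sucimg by auto
  have peak: "Peak0 u \<subseteq> ?S \<longleftrightarrow> \<not>(\<exists>k<n. d1 k \<and> d2 k \<and> (k \<in> J) = (k+1 \<in> J))"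
  proof
    assume H: "Peak0 u \<subseteq> ?S"
    show "\<not>(\<exists>k<n. d1 k \<and> d2 k \<and> (k \<in> J) = (k+1 \<in> J))"
    proof
      assume "\<exists>k<n. d1 k \<and> d2 k \<and> (k \<in> J) = (k+1 \<in> J)"
      then obtain k where k: "k<n" "d1 k" "d2 k" "(k \<in> J) = (k+1 \<in> J)" by blast
      then have "Suc k \<in> Peak0 u" unfolding Peak0_eq d1_def d2_def using l by auto
      then have "Suc k \<in> ?S" using H by blast
      then show False using k memS by simp
    qed
  next
    assume H: "\<not>(\<exists>k<n. d1 k \<and> d2 k \<and> (k \<in> J) = (k+1 \<in> J))"
    show "Peak0 u \<subseteq> ?S"
    proof
      fix p assume "p \<in> Peak0 u"
      then obtain k where p: "p = Suc k" and k: "0 < k" "k+1 < n" "u!(k-1) < u!k" "u!(k+1) < u!k"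
        unfolding Peak0_eq l by blast
      have "d1 k" "d2 k" unfolding d1_def d2_def using k by auto
      then have "(k \<in> J) \<noteq> (k+1 \<in> J)" using H k by auto
      then show "p \<in> ?S" using p memS by simp
    qed
  qed
  show ?thesis
  proof (cases "\<exists>k<n. d1 k \<and> d2 k \<and> (k \<in> J) = (k+1 \<in> J)")
    case True
    then obtain k where k: "k<n" "d1 k \<and> d2 k \<and> (k \<in> J) = (k+1 \<in> J)" by blast
    then have "card (A k) = 0" using cardA by simp
    then have p0: "(\<Prod>k<n. card (A k)) = 0" using k by (auto intro: prod_zero)
    have "\<not> Peak0 u \<subseteq> ?S" using peak True by blast
    then show ?thesis using phi2 p0 by simp
  next
    case False
    obtain m where m: "n = Suc m" using n by (cases n) auto
    define P where "P = {k. 0 < k \<and> k+1 < length u \<and> u!(k-1) < u!k \<and> u!(k+1) < u!k}"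
    have cP: "card (Peak0 u) = card P" unfolding Peak0_eq P_def by (rule card_image) simp
    have h: "\<forall>k<n. card (A k) * 2 ^ (of_bool (d1 k) + of_bool (d2 k)) = 2 ^ (1 + of_bool (d1 k \<and> d2 k))"
      using cardA False by auto
    have s1: "(\<Sum>k<n. of_bool (d1 k) + of_bool (d2 k) :: nat) = m"
    proof -
      have "(\<Sum>k<n. of_bool (d1 k) + of_bool (d2 k) :: nat) = card {k. k<m \<and> True}"
        unfolding m d1_def d2_def using sum_c[of u m "\<lambda>k. True"] l m d by simp
      then show ?thesis by simp
    qed
    have s2: "(\<Sum>k<n. 1 + of_bool (d1 k \<and> d2 k) :: nat) = n + card P"
    proof -
      have "(\<Sum>k<n. 1 + of_bool (d1 k \<and> d2 k) :: nat) = n + card ({..<n} \<inter> {k. d1 k \<and> d2 k})"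
        unfolding sum.distrib by simp
      also have "{..<n} \<inter> {k. d1 k \<and> d2 k} = P" unfolding P_def d1_def d2_def l by auto
      finally show ?thesis .
    qed
    have "(\<Sum>k<n. of_bool (d1 k) + of_bool (d2 k) :: nat) + (1 + card P) = (\<Sum>k<n. 1 + of_bool (d1 k \<and> d2 k))"
      using s1 s2 m by simp
    then have "(\<Prod>k<n. card (A k)) = 2 ^ (1 + card P)"
      by (rule prod_pow_cancel[OF h])
    then show ?thesis using phi2 peak False cP by simp
  qed
qed


lemma phi_zero:
  assumes "u \<notin> perms n" shows "phi n f u = 0"
proof -
  have e: "{w \<in> signed_perms n. map (\<lambda>x. nat \<bar>x\<bar>) w = u} = {}" by (rule fiber_empty[OF assms])
  show ?thesis unfolding phi_def e by simp
qed

theorem proposition5p8: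
  fixes n :: nat and J :: "nat set"
  assumes "1 \<le> n" and "J \<subseteq> {1..n - 1}"
  shows "phi n (X0 n J) =
           (\<lambda>u. 2 ^ (1 + card J) *
              (\<Sum>F \<in> {F \<in> F0 n. F \<subseteq> J \<union> (\<lambda>j. j + 1) ` J}. P0 n F u)) \<and>
         phi n (Y0 n J) =
           (\<lambda>u. \<Sum>F \<in> {F \<in> F0 n. F \<subseteq> (J - (\<lambda>j. j + 1) ` J) \<union> ((\<lambda>j. j + 1) ` J - J)}.
              2 ^ (1 + card F) * P0 n F u)"
proof (intro conjI ext)
  fix u
  show "phi n (X0 n J) u = 2 ^ (1 + card J) *
              (\<Sum>F \<in> {F \<in> F0 n. F \<subseteq> J \<union> (\<lambda>j. j + 1) ` J}. P0 n F u)"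
  proof (cases "u \<in> perms n")
    case True
    show ?thesis using X_main[OF True assms(2) assms(1)] sumP0[OF True] by simp
  next
    case False
    then show ?thesis using phi_zero[OF False] unfolding P0_def by simp
  qed
next
  fix u
  show "phi n (Y0 n J) u = (\<Sum>F \<in> {F \<in> F0 n. F \<subseteq> (J - (\<lambda>j. j + 1) ` J) \<union> ((\<lambda>j. j + 1) ` J - J)}.
              2 ^ (1 + card F) * P0 n F u)"
  proof (cases "u \<in> perms n")
    case True
    show ?thesis using Y_main[OF True assms(2) assms(1)] sumP0'[OF True] by simp
  next
    case False
    then show ?thesis using phi_zero[OF False] unfolding P0_def by simp
  qed
qed

end
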